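(* Let $\mu_c$ be the 1-D Gaussian mixture below with $p=1/2$ and $\sigma_1=\sigma_2=\sigma$, and let $u>0$ with $|\gamma_1+\gamma_2|\le 2u$. For $\epsilon>0$ consider $$\max_{\mu_p\in\mathcal{Q}(u)}\big[L(h_{1,b_p};\mu_c)+\epsilon L(h_{1,b_p};\mu_p)\big],\qquad b_p=\arg\min_{b\in\mathbb{R}}\big[L(h_{1,b};\mu_c)+\epsilon L(h_{1,b};\mu_p)\big].$$ Then there exists $\alpha\in[0,1]$ such that the optimal value of this problem is attained at $\mu_p=\nu_\alpha$.
   Context: Data model: $(x,y)\in\mathbb{R}\times\{-1,+1\}$ with $y=-1,\ x\sim\mathcal{N}(\gamma_1,\sigma_1^2)$ with probability $p$, and $y=+1,\ x\sim\mathcal{N}(\gamma_2,\sigma_2^2)$ with probability $1-p$. $h_{w,b}(x)=\mathrm{sgn}(wx+b)$ with $w\in\{-1,1\}$, $b\in\mathbb{R}$. Hinge loss $\ell(h_{w,b};x,y)=\max\{0,1-y(wx+b)\}$; $L(h;\mu)=\mathbb{E}_\mu[\ell(h;x,y)]$. $\mathcal{Q}(u)$ is the set of distributions supported on $[-u,u]\times\{-1,+1\}$. Two-point distribution $\nu_\alpha$: $(x,y)=(-u,+1)$ with probability $\alpha$ and $(u,-1)$ with probability $1-\alpha$. *)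

theory Defs
  imports "HOL-Probability.Probability"
begin

definition hinge :: "real \<Rightarrow> real \<Rightarrow> real \<Rightarrow> real \<Rightarrow> real" where
  "hinge w b x y = max 0 (1 - y * (w * x + b))"

definition L_meas :: "(real \<times> real) measure \<Rightarrow> real \<Rightarrow> real \<Rightarrow> real" where
  "L_meas M w b = (\<integral>z. hinge w b (fst z) (snd z) \<partial>M)"

definition L_gmm :: "real \<Rightarrow> real \<Rightarrow> real \<Rightarrow> real \<Rightarrow> real \<Rightarrow> real \<Rightarrow> real \<Rightarrow> real" where
  "L_gmm p g1 s1 g2 s2 w b =
     p * (\<integral>x. normal_density g1 s1 x * hinge w b x (-1) \<partial>lborel)
   + (1 - p) * (\<integral>x. normal_density g2 s2 x * hinge w b x 1 \<partial>lborel)"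

definition Q :: "real \<Rightarrow> (real \<times> real) measure set" where
  "Q u = {M. prob_space M \<and> sets M = sets borel \<and>
             (AE z in M. z \<in> {-u..u} \<times> {-1, 1})}"

definition nu :: "real \<Rightarrow> real \<Rightarrow> (real \<times> real) measure" where
  "nu u \<alpha> = distr (measure_pmf (bernoulli_pmf \<alpha>)) borel
              (\<lambda>c. if c then (-u, 1) else (u, -1))"

definition obj :: "real \<Rightarrow> real \<Rightarrow> real \<Rightarrow> real \<Rightarrow> (real \<times> real) measure \<Rightarrow> real \<Rightarrow> real" where
  "obj g1 g2 s \<epsilon> M b = L_gmm (1/2) g1 s g2 s 1 b + \<epsilon> * L_meas M 1 b"

end

theory Submission
  imports Defs "HOL-Analysis.Analysis"
begin



lemma hinge_bound:
  assumes "\<bar>y\<bar> \<le> 1"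
  shows "\<bar>hinge 1 b x y\<bar> \<le> 1 + \<bar>b\<bar> + \<bar>m\<bar> + \<bar>x - m\<bar>"
proof -
  have "\<bar>y * (x + b)\<bar> \<le> 1 * \<bar>x + b\<bar>"
    unfolding abs_mult by (intro mult_right_mono assms) auto
  moreover have "\<bar>x + b\<bar> \<le> \<bar>b\<bar> + \<bar>m\<bar> + \<bar>x - m\<bar>" by linarith
  ultimately show ?thesis unfolding hinge_def by (simp add: abs_le_iff) linarith
qed

lemma gauss_int:
  assumes "0 < s" "\<bar>y\<bar> \<le> 1"
  shows "integrable lborel (\<lambda>x. normal_density m s x * hinge 1 b x y)"
proof (rule Bochner_Integration.integrable_bound)
  show "integrable lborel (\<lambda>x. normal_density m s x * (1 + \<bar>b\<bar> + \<bar>m\<bar>) + normal_density m s x * \<bar>x - m\<bar>^1)"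
    using integrable_normal_moment_abs[OF assms(1), of m 1] integrable_normal_density[OF assms(1), of m]
    by (intro Bochner_Integration.integrable_add) auto
  show "(\<lambda>x. normal_density m s x * hinge 1 b x y) \<in> borel_measurable lborel"
    unfolding hinge_def by measurable
  show "AE x in lborel. norm (normal_density m s x * hinge 1 b x y) \<le> norm (normal_density m s x * (1 + \<bar>b\<bar> + \<bar>m\<bar>) + normal_density m s x * \<bar>x - m\<bar>^1)"
  proof (intro AE_I2)
    fix x
    have "\<bar>hinge 1 b x y\<bar> \<le> 1 + \<bar>b\<bar> + \<bar>m\<bar> + \<bar>x - m\<bar>" by (rule hinge_bound[OF assms(2)])
    hence "normal_density m s x * \<bar>hinge 1 b x y\<bar> \<le> normal_density m s x * (1 + \<bar>b\<bar> + \<bar>m\<bar> + \<bar>x - m\<bar>)"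
      by (intro mult_left_mono) auto
    thus "norm (normal_density m s x * hinge 1 b x y) \<le> norm (normal_density m s x * (1 + \<bar>b\<bar> + \<bar>m\<bar>) + normal_density m s x * \<bar>x - m\<bar>^1)"
      by (simp add: abs_mult algebra_simps)
  qed
qed

lemma hinge_lip:
  assumes "\<bar>y\<bar> \<le> 1"
  shows "\<bar>hinge 1 b x y - hinge 1 b' x y\<bar> \<le> \<bar>b - b'\<bar>"
proof -
  have m: "\<bar>max 0 p - max 0 q\<bar> \<le> \<bar>p - q\<bar>" for p q :: real by linarith
  have e: "(1 - y * (1 * x + b)) - (1 - y * (1 * x + b')) = y * (b' - b)" by (simp add: algebra_simps)
  have "\<bar>y * (b' - b)\<bar> \<le> 1 * \<bar>b - b'\<bar>"
    unfolding abs_mult by (intro mult_mono assms) auto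
  thus ?thesis unfolding hinge_def using m[of "1 - y * (1 * x + b)" "1 - y * (1 * x + b')"] e by simp
qed

lemma gauss_lip:
  assumes "0 < s" "\<bar>y\<bar> \<le> 1"
  shows "\<bar>(\<integral>x. normal_density m s x * hinge 1 b x y \<partial>lborel) - (\<integral>x. normal_density m s x * hinge 1 b' x y \<partial>lborel)\<bar> \<le> \<bar>b - b'\<bar>"
proof -
  have "(\<integral>x. normal_density m s x * hinge 1 b x y \<partial>lborel) - (\<integral>x. normal_density m s x * hinge 1 b' x y \<partial>lborel)
      = (\<integral>x. normal_density m s x * hinge 1 b x y - normal_density m s x * hinge 1 b' x y \<partial>lborel)"
    by (intro Bochner_Integration.integral_diff[symmetric] gauss_int assms)
  also have "\<bar>\<dots>\<bar> \<le> (\<integral>x. normal_density m s x * \<bar>b - b'\<bar> \<partial>lborel)"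
  proof (rule integral_abs_bound_integral)
    show "integrable lborel (\<lambda>x. normal_density m s x * hinge 1 b x y - normal_density m s x * hinge 1 b' x y)"
      by (intro Bochner_Integration.integrable_diff gauss_int assms)
    show "integrable lborel (\<lambda>x. normal_density m s x * \<bar>b - b'\<bar>)"
      using integrable_normal_density[OF assms(1), of m] by auto
    fix x
    have "normal_density m s x * \<bar>hinge 1 b x y - hinge 1 b' x y\<bar> \<le> normal_density m s x * \<bar>b - b'\<bar>"
      by (intro mult_left_mono hinge_lip assms) auto
    thus "\<bar>normal_density m s x * hinge 1 b x y - normal_density m s x * hinge 1 b' x y\<bar> \<le> normal_density m s x * \<bar>b - b'\<bar>"
      by (simp add: abs_mult right_diff_distrib[symmetric])
  qed
  also have "\<dots> = \<bar>b - b'\<bar>" using integral_normal_density[OF assms(1), of m] by simp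
  finally show ?thesis .
qed

lemma gauss_lower:
  assumes "0 < s" "\<bar>y\<bar> \<le> 1"
  shows "(\<integral>x. normal_density m s x * hinge 1 b x y \<partial>lborel) \<ge> 1 - y * b - y * m"
proof -
  have "(\<integral>x. normal_density m s x * hinge 1 b x y \<partial>lborel) \<ge> (\<integral>x. normal_density m s x * (1 - y * b) - y * (normal_density m s x * x) \<partial>lborel)"
  proof (rule integral_mono)
    show "integrable lborel (\<lambda>x. normal_density m s x * hinge 1 b x y)" by (rule gauss_int[OF assms])
    show "integrable lborel (\<lambda>x. normal_density m s x * (1 - y * b) - y * (normal_density m s x * x))"
      using integrable_normal_moment_nz_1[OF assms(1), of m] integrable_normal_density[OF assms(1), of m] by auto
    fix x
    have "1 - y * b - y * x \<le> hinge 1 b x y" unfolding hinge_def by (simp add: algebra_simps)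
    hence "normal_density m s x * (1 - y * b - y * x) \<le> normal_density m s x * hinge 1 b x y"
      by (intro mult_left_mono) auto
    thus "normal_density m s x * (1 - y * b) - y * (normal_density m s x * x) \<le> normal_density m s x * hinge 1 b x y"
      by (simp add: algebra_simps)
  qed
  also have "(\<integral>x. normal_density m s x * (1 - y * b) - y * (normal_density m s x * x) \<partial>lborel) = 1 - y * b - y * m"
    using integrable_normal_moment_nz_1[OF assms(1), of m] integral_normal_moment_nz_1[OF assms(1), of m]
      integrable_normal_density[OF assms(1), of m] integral_normal_density[OF assms(1), of m]
    by (subst Bochner_Integration.integral_diff) auto
  finally show ?thesis .
qed



lemma nu_L:
  assumes "0 \<le> a" "a \<le> 1"
  shows "L_meas (nu u a) 1 b = a * hinge 1 b (-u) 1 + (1 - a) * hinge 1 b u (-1)"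
  unfolding L_meas_def nu_def
  using assms by (subst integral_distr) (auto simp: hinge_def intro!: borel_measurable_continuous_onI continuous_intros)

lemma nu_Q:
  assumes "0 \<le> u"
  shows "nu u a \<in> Q u"
  unfolding Q_def nu_def
proof (intro CollectI conjI)
  show "prob_space (distr (measure_pmf (bernoulli_pmf a)) borel (\<lambda>c. if c then (- u, 1) else (u, - 1)))"
    by (intro prob_space.prob_space_distr) (auto simp: measure_pmf.prob_space_axioms)
  show "sets (distr (measure_pmf (bernoulli_pmf a)) borel (\<lambda>c. if c then (- u, 1) else (u, - 1))) = sets borel"
    by simp
  show "AE z in distr (measure_pmf (bernoulli_pmf a)) borel (\<lambda>c. if c then (- u, 1::real) else (u, - 1)). z \<in> {- u..u} \<times> {- 1, 1}"
    using assms by (subst AE_distr_iff) (auto intro!: borel_closed closed_Times)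
qed

lemma Q_bound:
  assumes M: "M \<in> Q u"
  shows "L_meas M 1 b \<le> measure M {z. snd z = 1} * hinge 1 b (-u) 1 + (1 - measure M {z. snd z = 1}) * hinge 1 b u (-1)"
proof -
  from M have ps: "prob_space M" and sM: "sets M = sets borel" and ae: "AE z in M. z \<in> {-u..u} \<times> {-1, 1}"
    unfolding Q_def by auto
  interpret prob_space M by (rule ps)
  have mc: "\<And>N. measurable M N = measurable borel N" by (rule measurable_cong_sets[OF sM refl])
  define A where "A = hinge 1 b (-u) 1"
  define B where "B = hinge 1 b u (-1)"
  define S where "S = {z::real\<times>real. snd z = 1}"
  have Sm: "S \<in> sets M" unfolding sM S_def by (intro borel_closed closed_Collect_eq continuous_intros)
  have hm: "(\<lambda>z. hinge 1 b (fst z) (snd z)) \<in> borel_measurable M"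
    unfolding mc hinge_def by (intro borel_measurable_continuous_onI continuous_intros)
  have bnd: "AE z in M. hinge 1 b (fst z) (snd z) \<le> B + (A - B) * indicator S z"
    using ae by eventually_elim (auto simp: A_def B_def S_def hinge_def indicator_def)
  have bnd2: "AE z in M. norm (hinge 1 b (fst z) (snd z)) \<le> norm ((\<lambda>_. 1 + u + \<bar>b\<bar>) z)"
    using ae by eventually_elim (auto simp: hinge_def)
  have hi: "integrable M (\<lambda>z. hinge 1 b (fst z) (snd z))"
    by (rule Bochner_Integration.integrable_bound[OF _ hm bnd2]) simp
  have gi: "integrable M (\<lambda>z. B + (A - B) * indicator S z)"
    using Sm by (intro Bochner_Integration.integrable_add integrable_mult_right integrable_real_indicator) (auto simp: less_top[symmetric])
  have "L_meas M 1 b \<le> (\<integral>z. B + (A - B) * indicator S z \<partial>M)"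
    unfolding L_meas_def by (rule integral_mono_AE[OF hi gi bnd])
  also have "\<dots> = B + (A - B) * measure M S"
    using Sm by (subst Bochner_Integration.integral_add) (auto simp: prob_space less_top[symmetric] intro!: integrable_real_indicator)
  finally show ?thesis unfolding A_def B_def S_def by (simp add: algebra_simps)
qed

lemma Q_prob: "M \<in> Q u \<Longrightarrow> measure M S \<in> {0..1}"
  unfolding Q_def by (auto intro: prob_space.prob_le_1)


theorem mainTheorem5:
  fixes g1 g2 s u \<epsilon> :: real
  assumes "s > 0" and "u > 0" and "\<bar>g1 + g2\<bar> \<le> 2 * u" and "\<epsilon> > 0"
  shows "\<exists>\<alpha>\<in>{0..1}. nu u \<alpha> \<in> Q u \<and>
           (\<exists>b\<alpha>. is_arg_min (obj g1 g2 s \<epsilon> (nu u \<alpha>)) (\<lambda>_. True) b\<alpha> \<and>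
              (\<forall>M\<in>Q u. \<forall>b. is_arg_min (obj g1 g2 s \<epsilon> M) (\<lambda>_. True) b \<longrightarrow>
                  obj g1 g2 s \<epsilon> M b \<le> obj g1 g2 s \<epsilon> (nu u \<alpha>) b\<alpha>))"
proof -
  note s = assms(1) and u = assms(2) and ep = assms(4)
  define Lc where "Lc b = L_gmm (1/2) g1 s g2 s 1 b" for b
  define I1 where "I1 b = (\<integral>x. normal_density g1 s x * hinge 1 b x (-1) \<partial>lborel)" for b
  define I2 where "I2 b = (\<integral>x. normal_density g2 s x * hinge 1 b x 1 \<partial>lborel)" for b
  have Lc_eq: "Lc b = I1 b / 2 + I2 b / 2" for b
    unfolding Lc_def L_gmm_def I1_def I2_def by simp
  have I1_lip: "\<bar>I1 b - I1 b'\<bar> \<le> \<bar>b - b'\<bar>" for b b'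
    unfolding I1_def by (rule gauss_lip[OF s]) simp
  have I2_lip: "\<bar>I2 b - I2 b'\<bar> \<le> \<bar>b - b'\<bar>" for b b'
    unfolding I2_def by (rule gauss_lip[OF s]) simp
  have Lc_lip: "\<bar>Lc b - Lc b'\<bar> \<le> \<bar>b - b'\<bar>" for b b'
    using I1_lip[of b b'] I2_lip[of b b'] unfolding Lc_eq by linarith
  have I1_nn: "I1 b \<ge> 0" for b
    unfolding I1_def by (intro integral_nonneg_AE AE_I2) (auto simp: hinge_def)
  have I2_nn: "I2 b \<ge> 0" for b
    unfolding I2_def by (intro integral_nonneg_AE AE_I2) (auto simp: hinge_def)
  have I1_lo: "I1 b \<ge> 1 + b + g1" for b
    using gauss_lower[OF s, where y="-1" and m=g1 and b=b] unfolding I1_def by simp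
  have I2_lo: "I2 b \<ge> 1 - b - g2" for b
    using gauss_lower[OF s, where y=1 and m=g2 and b=b] unfolding I2_def by simp
  define C where "C = \<bar>g1\<bar> + \<bar>g2\<bar>"
  have Lc_lo: "Lc b \<ge> (\<bar>b\<bar> - C) / 2" for b
    using I1_lo[of b] I2_lo[of b] I1_nn[of b] I2_nn[of b] abs_ge_self[of g1] abs_ge_minus_self[of g2]
    unfolding Lc_eq C_def by (cases "b \<ge> 0") auto
  have Lc_cont: "continuous_on UNIV Lc"
  proof (rule lipschitz_on_continuous_on)
    show "1-lipschitz_on UNIV Lc" using Lc_lip by (auto simp: lipschitz_on_def dist_real_def)
  qed
  define N where "N a b = a * hinge 1 b (-u) 1 + (1 - a) * hinge 1 b u (-1)" for a b
  define f where "f a b = Lc b + \<epsilon> * N a b" for a b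
  have f_obj: "a \<in> {0..1} \<Longrightarrow> obj g1 g2 s \<epsilon> (nu u a) = f a" for a
    by (auto simp: fun_eq_iff obj_def f_def Lc_def N_def nu_L)
  have f_cont: "continuous_on UNIV (f a)" for a
    unfolding f_def N_def hinge_def by (intro continuous_intros Lc_cont)
  define K0 where "K0 = Lc 0 + \<epsilon> * (1 + u)"
  define R where "R = 2 * K0 + C + 1"
  have N_nn: "a \<in> {0..1} \<Longrightarrow> N a b \<ge> 0" for a b
    unfolding N_def hinge_def by (auto intro!: add_nonneg_nonneg mult_nonneg_nonneg)
  have f0: "f a 0 = K0" for a
    unfolding f_def N_def K0_def hinge_def using u by (simp add: algebra_simps)
  have far: "a \<in> {0..1} \<Longrightarrow> \<bar>b\<bar> > R \<Longrightarrow> f a b > K0" for a b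
  proof -
    assume a: "a \<in> {0..1}" and b: "\<bar>b\<bar> > R"
    have "f a b \<ge> Lc b" unfolding f_def using N_nn[OF a, of b] ep by simp
    moreover have "(\<bar>b\<bar> - C) / 2 > K0" using b unfolding R_def by (simp add: field_simps)
    hence "Lc b > K0" using Lc_lo[of b] by linarith
    ultimately show ?thesis by linarith
  qed
  have ex_min: "\<exists>b. \<bar>b\<bar> \<le> R \<and> (\<forall>y. f a b \<le> f a y)" if a: "a \<in> {0..1}" for a
  proof -
    have R0: "0 \<le> R"
    proof (rule ccontr)
      assume "\<not> 0 \<le> R" hence "\<bar>0::real\<bar> > R" by simp
      from far[OF a this] f0[of a] show False by simp
    qed
    obtain x where x: "x \<in> {-R..R}" "\<forall>y\<in>{-R..R}. f a x \<le> f a y"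
      using continuous_attains_inf[of "{-R..R}" "f a"] continuous_on_subset[OF f_cont] R0 by auto
    have "f a x \<le> f a y" for y
    proof (cases "\<bar>y\<bar> \<le> R")
      case True hence "y \<in> {-R..R}" by (simp add: abs_le_iff)
      thus ?thesis using x by auto
    next
      case False
      hence "f a y > K0" using far[OF a] by simp
      moreover have "f a x \<le> f a 0" using x R0 by auto
      ultimately show ?thesis using f0[of a] by simp
    qed
    thus ?thesis using x by (intro exI[of _ x]) auto
  qed
  define bsel where "bsel a = (SOME b. \<bar>b\<bar> \<le> R \<and> (\<forall>y. f a b \<le> f a y))" for a
  have bsel: "a \<in> {0..1} \<Longrightarrow> \<bar>bsel a\<bar> \<le> R \<and> (\<forall>y. f a (bsel a) \<le> f a y)" for a
    unfolding bsel_def by (rule someI_ex) (rule ex_min)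
  define G where "G a = f a (bsel a)" for a
  define Lg where "Lg = \<epsilon> * (2 + 2 * u + 2 * R)"
  have fdiff: "f a b \<le> f a' b + Lg * \<bar>a - a'\<bar>" if "\<bar>b\<bar> \<le> R" for a a' b
  proof -
    have h1: "0 \<le> hinge 1 b (-u) 1" "hinge 1 b (-u) 1 \<le> 1 + u + R"
      "0 \<le> hinge 1 b u (-1)" "hinge 1 b u (-1) \<le> 1 + u + R"
      using that u unfolding hinge_def by auto
    have "N a b - N a' b = (a - a') * (hinge 1 b (-u) 1 - hinge 1 b u (-1))"
      unfolding N_def by (simp add: algebra_simps)
    hence "\<bar>N a b - N a' b\<bar> = \<bar>a - a'\<bar> * \<bar>hinge 1 b (-u) 1 - hinge 1 b u (-1)\<bar>"
      by (simp add: abs_mult)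
    also have "\<dots> \<le> \<bar>a - a'\<bar> * (2 + 2 * u + 2 * R)"
      using h1 by (intro mult_left_mono) auto
    finally have "\<epsilon> * \<bar>N a b - N a' b\<bar> \<le> \<epsilon> * (\<bar>a - a'\<bar> * (2 + 2 * u + 2 * R))"
      using ep by (intro mult_left_mono) auto
    moreover have "\<epsilon> * (N a b - N a' b) \<le> \<epsilon> * \<bar>N a b - N a' b\<bar>"
      using ep by (intro mult_left_mono) auto
    moreover have "\<epsilon> * (\<bar>a - a'\<bar> * (2 + 2 * u + 2 * R)) = Lg * \<bar>a - a'\<bar>"
      unfolding Lg_def by simp
    ultimately have "\<epsilon> * (N a b - N a' b) \<le> Lg * \<bar>a - a'\<bar>" by linarith
    thus ?thesis unfolding f_def by (simp add: algebra_simps)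
  qed
  have Glip: "G a \<le> G a' + Lg * \<bar>a - a'\<bar>" if "a \<in> {0..1}" "a' \<in> {0..1}" for a a'
  proof -
    have "G a \<le> f a (bsel a')" unfolding G_def using bsel[OF that(1)] by auto
    also have "\<dots> \<le> f a' (bsel a') + Lg * \<bar>a - a'\<bar>" using bsel[OF that(2)] by (intro fdiff) auto
    finally show ?thesis unfolding G_def .
  qed
  have Lg0: "0 \<le> Lg"
  proof -
    have "0 \<le> R" using bsel[of 0] by auto
    thus ?thesis unfolding Lg_def using ep u by auto
  qed
  have Gcont: "continuous_on {0..1} G"
  proof (rule lipschitz_on_continuous_on)
    show "Lg-lipschitz_on {0..1} G"
      unfolding lipschitz_on_def dist_real_def
    proof (intro conjI Lg0 ballI)
      fix x y :: real assume "x \<in> {0..1}" "y \<in> {0..1}"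
      with Glip[of x y] Glip[of y x] show "\<bar>G x - G y\<bar> \<le> Lg * \<bar>x - y\<bar>"
        by (simp add: abs_minus_commute abs_le_iff)
    qed
  qed
  obtain a where a: "a \<in> {0..1}" "\<forall>y\<in>{0..1}. G y \<le> G a"
    using continuous_attains_sup[OF compact_Icc _ Gcont] by auto
  show ?thesis
  proof (intro bexI[OF _ a(1)] conjI exI[of _ "bsel a"] ballI allI impI)
    show "nu u a \<in> Q u" using u by (intro nu_Q) simp
    show "is_arg_min (obj g1 g2 s \<epsilon> (nu u a)) (\<lambda>_. True) (bsel a)"
      unfolding f_obj[OF a(1)] is_arg_min_def using bsel[OF a(1)] by (auto simp: not_less)
    fix M b assume M: "M \<in> Q u" and bm: "is_arg_min (obj g1 g2 s \<epsilon> M) (\<lambda>_. True) b"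
    define q where "q = measure M {z. snd z = 1}"
    have q: "q \<in> {0..1}" unfolding q_def by (rule Q_prob[OF M])
    have "obj g1 g2 s \<epsilon> M b \<le> obj g1 g2 s \<epsilon> M (bsel q)"
      using bm unfolding is_arg_min_def by (auto simp: not_less)
    also have "\<dots> \<le> f q (bsel q)"
    proof -
      have "L_meas M 1 (bsel q) \<le> N q (bsel q)"
        using Q_bound[OF M, of "bsel q"] unfolding N_def q_def .
      thus ?thesis unfolding obj_def f_def Lc_def using ep by (simp add: mult_left_mono)
    qed
    also have "\<dots> = G q" unfolding G_def ..
    also have "\<dots> \<le> G a" using a q by auto
    also have "\<dots> = obj g1 g2 s \<epsilon> (nu u a) (bsel a)" unfolding G_def f_obj[OF a(1)] ..
    finally show "obj g1 g2 s \<epsilon> M b \<le> obj g1 g2 s \<epsilon> (nu u a) (bsel a)" .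
  qed
qed

end
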